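(* Let $A\in\mathbb{C}^{m\times n}$ have rank $r$, $B\in\mathbb{C}^{m\times n}$ have rank $s$, and $E=B-A$. Then $$\|B^{\dagger}-A^{\dagger}\|_{F}^{2}\geq\max\big\{\delta'_{1}+\|B^{\dagger}EA^{\dagger}\|_{F}^{2},\ \delta'_{2}+\|A^{\dagger}EB^{\dagger}\|_{F}^{2}\big\},$$ where $$\delta'_{1}:=\frac{\|E\|_{F}^{2}-\min\big\{\|B\|_{2}^{2}\|AA^{\dagger}EB^{\dagger}\|_{F}^{2},\|A\|_{2}^{2}\|A^{\dagger}EB^{\dagger}B\|_{F}^{2}\big\}}{\max\big\{\|A\|_{2}^{4},\|B\|_{2}^{4}\big\}},$$ $$\delta'_{2}:=\frac{\|E\|_{F}^{2}-\min\big\{\|A\|_{2}^{2}\|BB^{\dagger}EA^{\dagger}\|_{F}^{2},\|B\|_{2}^{2}\|B^{\dagger}EA^{\dagger}A\|_{F}^{2}\big\}}{\max\big\{\|A\|_{2}^{4},\|B\|_{2}^{4}\big\}}.$$ In particular, if $s=r$, then $$\|B^{\dagger}-A^{\dagger}\|_{F}^{2}\geq\max\big\{\varepsilon'_{1}+\|B^{\dagger}EA^{\dagger}\|_{F}^{2},\ \varepsilon'_{2}+\|A^{\dagger}EB^{\dagger}\|_{F}^{2}\big\},$$ where $$\varepsilon'_{1}:=\frac{\|E\|_{F}^{2}-\min\big\{\|A\|_{2}^{2}\|BB^{\dagger}EA^{\dagger}\|_{F}^{2},\|B\|_{2}^{2}\|B^{\dagger}EA^{\dagger}A\|_{F}^{2}\big\}}{\|A\|_{2}^{2}\|B\|_{2}^{2}},$$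 $$\varepsilon'_{2}:=\frac{\|E\|_{F}^{2}-\min\big\{\|B\|_{2}^{2}\|AA^{\dagger}EB^{\dagger}\|_{F}^{2},\|A\|_{2}^{2}\|A^{\dagger}EB^{\dagger}B\|_{F}^{2}\big\}}{\|A\|_{2}^{2}\|B\|_{2}^{2}}.$$
   Context: $M^{\dagger}$ denotes the Moore–Penrose inverse of $M$, $\|\cdot\|_{2}$ the spectral norm and $\|\cdot\|_{F}$ the Frobenius norm. *)

theory Defs
  imports "HOL-Analysis.Analysis"
begin

definition ctrans :: "complex^'n^'m \<Rightarrow> complex^'m^'n" where
  "ctrans A = (\<chi> i j. cnj (A $ j $ i))"

definition mp_inv :: "complex^'n^'m \<Rightarrow> complex^'m^'n" where
  "mp_inv A = (THE X. A ** X ** A = A \<and> X ** A ** X = X \<and>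
                      ctrans (A ** X) = A ** X \<and> ctrans (X ** A) = X ** A)"

definition frob_norm :: "complex^'n^'m \<Rightarrow> real" where
  "frob_norm A = sqrt (\<Sum>i\<in>UNIV. \<Sum>j\<in>UNIV. (cmod (A $ i $ j))\<^sup>2)"

definition spec_norm :: "complex^'n^'m \<Rightarrow> real" where
  "spec_norm A = onorm (\<lambda>x. A *v x)"

end

theory Submission
  imports Defs
begin


lemma ctrans_nth[simp]: "ctrans A $ i $ j = cnj (A $ j $ i)"
  by (simp add: ctrans_def)

lemma ctrans_ctrans[simp]: "ctrans (ctrans A) = A"
  by (simp add: vec_eq_iff)

lemma ctrans_mult: "ctrans (A ** B) = ctrans B ** ctrans A"
  by (simp add: vec_eq_iff matrix_matrix_mult_def mult.commute)

lemma ctrans_add: "ctrans (A + B) = ctrans A + ctrans B"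
  by (simp add: vec_eq_iff)

lemma ctrans_diff: "ctrans (A - B) = ctrans A - ctrans B"
  by (simp add: vec_eq_iff)

lemma ctrans_uminus: "ctrans (- A) = - ctrans A"
  by (simp add: vec_eq_iff)

lemma ctrans_mat1[simp]: "ctrans (mat 1 :: complex^'n^'n) = mat 1"
  by (simp add: vec_eq_iff mat_def)

lemma ctrans_0[simp]: "ctrans (0 :: complex^'n^'m) = 0"
  by (simp add: vec_eq_iff)

definition cinner :: "complex^'n \<Rightarrow> complex^'n \<Rightarrow> complex" where
  "cinner x y = (\<Sum>i\<in>UNIV. x $ i * cnj (y $ i))"

lemma Re_cinner: "Re (cinner x y) = x \<bullet> y"
  by (simp add: cinner_def inner_vec_def inner_complex_def)

lemma cinner_mv: "cinner (A *v x) y = cinner x (ctrans A *v y)"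
  unfolding cinner_def matrix_vector_mult_def
  by (simp add: sum_distrib_left sum_distrib_right mult_ac)
     (rule sum.swap)

lemma cinner_cnj: "cinner y x = cnj (cinner x y)"
  by (simp add: cinner_def mult.commute)

lemma cinner_self: "cinner x x = complex_of_real ((norm x)\<^sup>2)"
proof -
  have "cinner x x = (\<Sum>i\<in>UNIV. complex_of_real ((cmod (x$i))\<^sup>2))"
    unfolding cinner_def by (rule sum.cong[OF refl]) (rule complex_norm_square[symmetric])
  also have "\<dots> = complex_of_real (\<Sum>i\<in>UNIV. (cmod (x$i))\<^sup>2)"
    by (simp only: of_real_sum)
  also have "(\<Sum>i\<in>UNIV. (cmod (x$i))\<^sup>2) = (norm x)\<^sup>2"
    by (simp add: norm_vec_def L2_set_def sum_nonneg)
  finally show ?thesis .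
qed

lemma cinner_self_eq0: "cinner x x = 0 \<longleftrightarrow> x = 0"
  by (simp add: cinner_self)

lemma cinner_diff_left: "cinner (x - y) z = cinner x z - cinner y z"
  by (simp add: cinner_def algebra_simps sum_subtractf)

lemma if10_mult: "(if P then 1 else 0) * (c::complex) = (if P then c else 0)"
  "(c::complex) * (if P then 1 else 0) = (if P then c else 0)" by auto

lemma cinner_axis_left: "cinner (axis j 1) y = cnj (y $ j)"
  by (simp add: cinner_def axis_def if10_mult)
lemma cinner_axis_right: "cinner x (axis j 1) = x $ j"
  by (subst cinner_cnj) (simp add: cinner_axis_left)



lemma ctrans_mv_component: "(ctrans M *v u) $ j = cnj (cinner (M *v axis j 1) u)"
  by (simp add: cinner_mv cinner_axis_left)

lemma cinner_scale_right: "cinner z (c *s u) = cnj c * cinner z u"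
  by (simp add: cinner_def sum_distrib_left mult_ac)

lemma mv_scale: "A *v (c *s v) = c *s (A *v (v::complex^'n))"
  by (simp add: vec_eq_iff matrix_vector_mult_def sum_distrib_left mult_ac)

lemma exists13:
  fixes A :: "complex^'n^'m"
  shows "\<exists>Y. A ** Y ** A = A \<and> ctrans (A ** Y) = A ** Y"
proof -
  let ?S = "range (\<lambda>x. A *v x)"
  have sub: "subspace ?S"
    by (intro linear_subspace_image subspace_UNIV) simp
  have spanS: "span ?S = ?S" using sub by (simp add: span_eq_iff)
  have "\<forall>j. \<exists>w. \<forall>v. cinner (axis j 1 - A *v w) (A *v v) = 0"
  proof
    fix j :: 'm
    obtain y z where y: "y \<in> span ?S" and z: "\<And>w. w \<in> span ?S \<Longrightarrow> orthogonal z w"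
      and xyz: "axis j 1 = y + z"
      using orthogonal_subspace_decomp_exists by blast
    from y spanS obtain w where yw: "y = A *v w" by auto
    have "cinner z (A *v v) = 0" for v
    proof -
      have "Re (cinner z (A *v v)) = 0" using z[of "A *v v"] spanS
        by (simp add: Re_cinner orthogonal_def)
      moreover have "Re (cinner z (A *v (\<i> *s v))) = 0" using z[of "A *v (\<i> *s v)"] spanS
        by (simp add: Re_cinner orthogonal_def)
      ultimately show ?thesis
        by (simp add: mv_scale cinner_scale_right complex_eq_iff)
    qed
    then show "\<exists>w. \<forall>v. cinner (axis j 1 - A *v w) (A *v v) = 0"
      using xyz yw by (intro exI[of _ w]) simp
  qed
  then obtain w where w: "\<And>j v. cinner (axis j 1 - A *v w j) (A *v v) = 0" by metis
  define Y where "Y = (\<chi> i j. w j $ i)"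
  define M where "M = A ** Y"
  have Ycol: "Y *v axis j 1 = w j" for j
    by (simp add: Y_def vec_eq_iff matrix_vector_mult_def axis_def if10_mult)
  have Mcol: "M *v axis j 1 = A *v w j" for j
    by (simp add: M_def matrix_vector_mul_assoc[symmetric] Ycol)
  have fix1: "ctrans M *v (A *v v) = A *v v" for v
  proof -
    have "(ctrans M *v (A *v v)) $ j = (A *v v) $ j" for j
    proof -
      have "cinner (A *v w j) (A *v v) = cinner (axis j 1) (A *v v)"
        using w[of j v] by (simp add: cinner_diff_left)
      then show ?thesis
        by (simp add: ctrans_mv_component Mcol cinner_axis_left)
    qed
    then show ?thesis by (simp add: vec_eq_iff)
  qed
  have MA: "ctrans M ** A = A"
    using fix1 by (simp add: matrix_eq matrix_vector_mul_assoc[symmetric])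
  have herm: "ctrans M = M"
  proof -
    have "ctrans M ** M = M"
      by (simp add: M_def matrix_mul_assoc MA[unfolded M_def])
    then have "ctrans M = ctrans (ctrans M ** M)" by simp
    also have "\<dots> = ctrans M ** M" by (simp add: ctrans_mult)
    finally show ?thesis using \<open>ctrans M ** M = M\<close> by simp
  qed
  show ?thesis
    using MA herm by (intro exI[of _ Y]) (simp add: M_def)
qed

lemma mp_exists:
  fixes A :: "complex^'n^'m"
  shows "\<exists>X. A ** X ** A = A \<and> X ** A ** X = X \<and>
             ctrans (A ** X) = A ** X \<and> ctrans (X ** A) = X ** A"
proof -
  obtain Y where Y1: "A ** Y ** A = A" and Y2: "ctrans (A ** Y) = A ** Y"
    using exists13 by blast
  obtain W where W1: "ctrans A ** W ** ctrans A = ctrans A"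
    and W2: "ctrans (ctrans A ** W) = ctrans A ** W"
    using exists13 by blast
  define Z where "Z = ctrans W"
  have ZA: "Z ** A = ctrans A ** W"
    using W2 by (simp add: Z_def ctrans_mult)
  have Z1: "A ** Z ** A = A"
  proof -
    have "ctrans (ctrans A ** W ** ctrans A) = A ** Z ** A"
      by (simp add: ctrans_mult Z_def matrix_mul_assoc)
    then show ?thesis using W1 by simp
  qed
  have Z2: "ctrans (Z ** A) = Z ** A" using ZA W2 by simp
  define X where "X = Z ** A ** Y"
  have "A ** X ** A = A"
    by (simp add: X_def matrix_mul_assoc Z1)
       (metis Y1 matrix_mul_assoc)
  moreover have "X ** A ** X = X"
  proof -
    have "X ** A ** X = Z ** (A ** Y ** A) ** Z ** A ** Y"
      by (simp add: X_def matrix_mul_assoc)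
    also have "\<dots> = Z ** (A ** Z ** A) ** Y" by (simp add: Y1 matrix_mul_assoc)
    also have "\<dots> = X" by (simp add: Z1 X_def matrix_mul_assoc)
    finally show ?thesis .
  qed
  moreover have "A ** X = A ** Y"
    by (simp add: X_def matrix_mul_assoc Z1)
  moreover have "X ** A = Z ** A"
    using Y1 by (metis X_def matrix_mul_assoc)
  ultimately show ?thesis using Y2 Z2 by (intro exI[of _ X]) simp
qed

lemma mp_unique:
  fixes A :: "complex^'n^'m"
  assumes X: "A ** X ** A = A" "X ** A ** X = X" "ctrans (A ** X) = A ** X" "ctrans (X ** A) = X ** A"
  and Y: "A ** Y ** A = A" "Y ** A ** Y = Y" "ctrans (A ** Y) = A ** Y" "ctrans (Y ** A) = Y ** A"
  shows "X = Y"
proof -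
  have cA1: "ctrans A = ctrans A ** A ** Y"
  proof -
    have "ctrans A = ctrans (A ** Y ** A)" using Y(1) by simp
    also have "\<dots> = ctrans A ** ctrans (A ** Y)" by (simp add: ctrans_mult matrix_mul_assoc)
    also have "\<dots> = ctrans A ** A ** Y" using Y(3) by (simp add: matrix_mul_assoc)
    finally show ?thesis .
  qed
  have cA2: "ctrans A = X ** A ** ctrans A"
  proof -
    have "ctrans A = ctrans (A ** X ** A)" using X(1) by simp
    also have "\<dots> = ctrans (X ** A) ** ctrans A" by (simp add: ctrans_mult matrix_mul_assoc)
    also have "\<dots> = X ** A ** ctrans A" using X(4) by (simp add: matrix_mul_assoc)
    finally show ?thesis .
  qed
  have "X = X ** (A ** X)" using X(2) by (simp add: matrix_mul_assoc)
  also have "\<dots> = X ** ctrans X ** ctrans A" using X(3)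
    by (metis ctrans_mult matrix_mul_assoc)
  also have "\<dots> = X ** ctrans X ** ctrans A ** A ** Y"
    by (metis cA1 matrix_mul_assoc)
  also have "\<dots> = X ** ctrans (A ** X) ** A ** Y"
    by (simp add: ctrans_mult matrix_mul_assoc)
  also have "\<dots> = X ** A ** Y"
    using X(3) X(2) by (metis matrix_mul_assoc)
  finally have 1: "X = X ** A ** Y" .
  have "Y = (Y ** A) ** Y" using Y(2) by (simp add: matrix_mul_assoc)
  also have "\<dots> = ctrans A ** ctrans Y ** Y" using Y(4)
    by (metis ctrans_mult)
  also have "\<dots> = X ** A ** ctrans A ** ctrans Y ** Y"
    by (metis cA2 matrix_mul_assoc)
  also have "\<dots> = X ** A ** ctrans (Y ** A) ** Y"
    by (simp add: ctrans_mult matrix_mul_assoc)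
  also have "\<dots> = X ** A ** Y"
    using Y(4) Y(2) by (metis matrix_mul_assoc)
  finally have 2: "Y = X ** A ** Y" .
  show ?thesis using 1 2 by simp
qed

lemma mp_inv_props:
  fixes A :: "complex^'n^'m"
  shows "A ** mp_inv A ** A = A" "mp_inv A ** A ** mp_inv A = mp_inv A"
    "ctrans (A ** mp_inv A) = A ** mp_inv A" "ctrans (mp_inv A ** A) = mp_inv A ** A"
proof -
  obtain X where X: "A ** X ** A = A \<and> X ** A ** X = X \<and>
             ctrans (A ** X) = A ** X \<and> ctrans (X ** A) = X ** A"
    using mp_exists by blast
  have "mp_inv A = X"
    unfolding mp_inv_def
    by (rule the_equality) (use X mp_unique in blast)+
  then show "A ** mp_inv A ** A = A" "mp_inv A ** A ** mp_inv A = mp_inv A"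
    "ctrans (A ** mp_inv A) = A ** mp_inv A" "ctrans (mp_inv A ** A) = mp_inv A ** A"
    using X by auto
qed



lemma norm_sq_vec: "(norm (x::complex^'n))\<^sup>2 = (\<Sum>i\<in>UNIV. (cmod (x$i))\<^sup>2)"
  by (simp add: norm_vec_def L2_set_def sum_nonneg)

lemma frob_sq: "(frob_norm X)\<^sup>2 = (\<Sum>i\<in>UNIV. \<Sum>j\<in>UNIV. (cmod (X$i$j))\<^sup>2)"
  unfolding frob_norm_def apply (rule real_sqrt_pow2)
  apply (rule sum_nonneg)
  apply (rule sum_nonneg)
  apply simp
  done

lemma frob_nonneg: "frob_norm X \<ge> 0"
  unfolding frob_norm_def apply (rule real_sqrt_ge_zero)
  apply (rule sum_nonneg)
  apply (rule sum_nonneg)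
  apply simp
  done

definition col :: "'j \<Rightarrow> complex^'j^'i \<Rightarrow> complex^'i" where
  "col j X = (\<chi> i. X $ i $ j)"

lemma frob_sq_col: "(frob_norm X)\<^sup>2 = (\<Sum>j\<in>UNIV. (norm (col j X))\<^sup>2)"
  by (simp add: frob_sq norm_sq_vec col_def) (rule sum.swap)

lemma col_mult: "col j (X ** Y) = X *v col j Y"
  by (simp add: col_def vec_eq_iff matrix_matrix_mult_def matrix_vector_mult_def)

lemma frob_ctrans: "frob_norm (ctrans X) = frob_norm X"
  unfolding frob_norm_def by (simp) (rule sum.swap)

lemma frob_uminus: "frob_norm (- X) = frob_norm X"
  unfolding frob_norm_def by simp

lemma bl_mv: "bounded_linear (\<lambda>x. (A::complex^'n^'m) *v x)"
  by (simp add: linear_conv_bounded_linear[symmetric])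

lemma spec_nonneg: "spec_norm A \<ge> 0"
  unfolding spec_norm_def by (rule onorm_pos_le[OF bl_mv])

lemma spec_bound: "norm (A *v x) \<le> spec_norm A * norm x"
  unfolding spec_norm_def by (rule onorm[OF bl_mv])

lemma frob_mult_left: "frob_norm (X ** Y) \<le> spec_norm X * frob_norm Y"
proof -
  have "(frob_norm (X ** Y))\<^sup>2 = (\<Sum>j\<in>UNIV. (norm (X *v col j Y))\<^sup>2)"
    by (simp add: frob_sq_col col_mult)
  also have "\<dots> \<le> (\<Sum>j\<in>UNIV. (spec_norm X)\<^sup>2 * (norm (col j Y))\<^sup>2)"
  proof (rule sum_mono)
    fix j
    have "norm (X *v col j Y) \<le> spec_norm X * norm (col j Y)" by (rule spec_bound)
    then have "(norm (X *v col j Y))\<^sup>2 \<le> (spec_norm X * norm (col j Y))\<^sup>2"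
      by (simp add: power_mono)
    then show "(norm (X *v col j Y))\<^sup>2 \<le> (spec_norm X)\<^sup>2 * (norm (col j Y))\<^sup>2"
      by (simp add: power_mult_distrib)
  qed
  also have "\<dots> = (spec_norm X * frob_norm Y)\<^sup>2"
    by (simp add: frob_sq_col power_mult_distrib sum_distrib_left)
  finally show ?thesis
    by (rule power2_le_imp_le) (simp add: spec_nonneg frob_nonneg)
qed

lemma spec_ctrans: "spec_norm (ctrans B) \<le> spec_norm B"
  unfolding spec_norm_def[of "ctrans B"]
proof (rule onorm_le)
  fix x
  let ?y = "ctrans B *v x"
  have "(norm ?y)\<^sup>2 = Re (cinner ?y ?y)" by (simp add: cinner_self)
  also have "\<dots> = Re (cinner x (B *v ?y))" by (simp add: cinner_mv)
  also have "\<dots> = x \<bullet> (B *v ?y)" by (simp add: Re_cinner)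
  also have "\<dots> \<le> norm x * norm (B *v ?y)" by (rule norm_cauchy_schwarz)
  also have "\<dots> \<le> norm x * (spec_norm B * norm ?y)"
    by (intro mult_left_mono spec_bound) simp
  finally have *: "(norm ?y)\<^sup>2 \<le> spec_norm B * norm x * norm ?y" by (simp add: mult_ac)
  show "norm ?y \<le> spec_norm B * norm x"
  proof (cases "norm ?y = 0")
    case True then show ?thesis by (simp add: spec_nonneg)
  next
    case False
    then have "norm ?y > 0" by simp
    from * have "norm ?y * norm ?y \<le> (spec_norm B * norm x) * norm ?y"
      by (simp add: power2_eq_square mult_ac)
    then show ?thesis using \<open>norm ?y > 0\<close> by (rule mult_right_le_imp_le)
  qed
qed

lemma frob_mult_right: "frob_norm (X ** B) \<le> frob_norm X * spec_norm B"
proof -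
  have "frob_norm (X ** B) = frob_norm (ctrans B ** ctrans X)"
    by (metis ctrans_mult frob_ctrans)
  also have "\<dots> \<le> spec_norm (ctrans B) * frob_norm (ctrans X)" by (rule frob_mult_left)
  also have "\<dots> \<le> spec_norm B * frob_norm X"
    by (simp add: frob_ctrans frob_nonneg mult_right_mono spec_ctrans)
  finally show ?thesis by (simp add: mult_ac)
qed

lemma pyth_vec:
  assumes P: "P ** P = P" "ctrans P = P"
  shows "(norm v)\<^sup>2 = (norm (P *v v))\<^sup>2 + (norm ((mat 1 - P) *v v))\<^sup>2"
proof -
  have e: "(mat 1 - P) *v v = v - P *v v"
    by (simp add: matrix_vector_mult_diff_rdistrib)
  have "P *v (v - P *v v) = 0"
    using P(1) by (simp add: matrix_vector_mult_diff_distrib matrix_vector_mul_assoc)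
  moreover have "cinner (P *v v) (v - P *v v) = cinner v (ctrans P *v (v - P *v v))"
    by (rule cinner_mv)
  ultimately have "cinner (P *v v) (v - P *v v) = 0"
    using P(2) by (simp add: cinner_def)
  then have "orthogonal (P *v v) (v - P *v v)"
    by (metis Re_cinner orthogonal_def zero_complex.simps(1))
  then have "(norm (P *v v + (v - P *v v)))\<^sup>2 = (norm (P *v v))\<^sup>2 + (norm (v - P *v v))\<^sup>2"
    by (rule norm_add_Pythagorean)
  then show ?thesis by (simp add: e)
qed

lemma pyth_left:
  assumes P: "P ** P = P" "ctrans P = P"
  shows "(frob_norm X)\<^sup>2 = (frob_norm (P ** X))\<^sup>2 + (frob_norm ((mat 1 - P) ** X))\<^sup>2"
proof -
  have "(frob_norm X)\<^sup>2 = (\<Sum>j\<in>UNIV. (norm (col j X))\<^sup>2)" by (rule frob_sq_col)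
  also have "\<dots> = (\<Sum>j\<in>UNIV. (norm (P *v col j X))\<^sup>2 + (norm ((mat 1 - P) *v col j X))\<^sup>2)"
    by (rule sum.cong[OF refl]) (rule pyth_vec[OF P])
  also have "\<dots> = (frob_norm (P ** X))\<^sup>2 + (frob_norm ((mat 1 - P) ** X))\<^sup>2"
    by (simp only: frob_sq_col col_mult sum.distrib)
  finally show ?thesis .
qed

lemma pyth_right:
  assumes P: "P ** P = P" "ctrans P = P"
  shows "(frob_norm X)\<^sup>2 = (frob_norm (X ** P))\<^sup>2 + (frob_norm (X ** (mat 1 - P)))\<^sup>2"
proof -
  have "(frob_norm (ctrans X))\<^sup>2 = (frob_norm (P ** ctrans X))\<^sup>2 + (frob_norm ((mat 1 - P) ** ctrans X))\<^sup>2"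
    by (rule pyth_left[OF P])
  moreover have "P ** ctrans X = ctrans (X ** P)" using P(2) by (simp add: ctrans_mult)
  moreover have "(mat 1 - P) ** ctrans X = ctrans (X ** (mat 1 - P))"
    using P(2) by (simp add: ctrans_mult ctrans_diff)
  ultimately show ?thesis by (simp add: frob_ctrans)
qed



lemma vm_rows: "x v* (A::complex^'n^'m) = (\<Sum>i\<in>UNIV. x $ i *s row i A)"
  by (simp add: vec_eq_iff vector_matrix_mult_def row_def sum_component mult.commute)

lemma row_in_span: "row i A \<in> vec.span (rows A)"
  by (rule vec.span_base) (auto simp: rows_def)

lemma vm_in_span: "x v* (A::complex^'n^'m) \<in> vec.span (rows A)"
  unfolding vm_rows by (intro vec.span_sum vec.span_scale row_in_span)

lemma row_mult: "row i (X ** Y) = (X $ i) v* Y"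
  by (simp add: vec_eq_iff row_def matrix_matrix_mult_def vector_matrix_mult_def mult.commute)

lemma row_eq: "row i A = A $ i"
  by (simp add: row_def vec_eq_iff)

lemma rank_mult_le: "rank ((X::complex^'k^'m) ** Y) \<le> rank Y"
  unfolding row_rank_def_gen
proof (rule vec.dim_mono, rule subsetI)
  fix r assume "r \<in> rows (X ** Y)"
  then obtain i where "r = row i (X ** Y)" by (auto simp: rows_def)
  then show "r \<in> vec.span (rows Y)" by (simp add: row_mult vm_in_span)
qed

lemma rank_mp: "rank (mp_inv B ** B) = rank B"
proof (rule antisym)
  show "rank (mp_inv B ** B) \<le> rank B" by (rule rank_mult_le)
  have "rank B = rank (B ** (mp_inv B ** B))"
    by (simp add: matrix_mul_assoc mp_inv_props(1))
  also have "\<dots> \<le> rank (mp_inv B ** B)" by (rule rank_mult_le)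
  finally show "rank B \<le> rank (mp_inv B ** B)" .
qed

lemma trace_idem_rank:
  fixes P :: "complex^'n^'n"
  assumes idem: "P ** P = P"
  shows "trace P = of_nat (rank P)"
proof -
  let ?V = "vec.span (rows P)"
  obtain Bs where Bs: "Bs \<subseteq> ?V" "vec.independent Bs" "?V \<subseteq> vec.span Bs" "card Bs = vec.dim ?V"
    by (rule vec.basis_exists)
  have spanBs: "vec.span Bs = ?V"
    using Bs(1,3) vec.span_mono[OF Bs(1)] by (simp add: vec.span_span) 
  have fin: "finite Bs" using Bs(2) by (rule vec.finiteI_independent)
  have rk: "rank P = card Bs" by (simp add: row_rank_def_gen Bs(4))
  let ?r = "vec.representation Bs"
  have sub: "vec.subspace {y. y v* P = y}"
    unfolding vec.subspace_def
    by (simp add: vector_matrix_left_distrib scalar_vector_matrix_assoc)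
  have fixV: "y v* P = y" if "y \<in> ?V" for y
  proof -
    have "row i P v* P = row i P" for i
    proof -
      have "row i P v* P = row i (P ** P)" by (metis row_mult row_eq)
      then show ?thesis using idem by simp
    qed
    then have "rows P \<subseteq> {y. y v* P = y}"
      by (auto simp: rows_def)
    then have "?V \<subseteq> {y. y v* P = y}"
      by (rule vec.span_minimal[OF _ sub])
    then show ?thesis using that by auto
  qed
  have inspan: "v \<in> vec.span Bs" if "v \<in> ?V" for v using that spanBs by simp
  have "trace P = (\<Sum>i\<in>UNIV. (row i P) $ i)"
    by (simp add: trace_def row_def)
  also have "\<dots> = (\<Sum>i\<in>UNIV. \<Sum>b\<in>Bs. ?r (row i P) b * b $ i)"
  proof (rule sum.cong[OF refl])
    fix i
    have "row i P = (\<Sum>b\<in>Bs. ?r (row i P) b *s b)"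
      by (rule vec.sum_representation_eq[symmetric, OF Bs(2) inspan[OF row_in_span] fin order.refl])
    then have "(row i P) $ i = (\<Sum>b\<in>Bs. ?r (row i P) b *s b) $ i" by simp
    also have "\<dots> = (\<Sum>b\<in>Bs. ?r (row i P) b * b $ i)" by (simp add: sum_component)
    finally show "(row i P) $ i = (\<Sum>b\<in>Bs. ?r (row i P) b * b $ i)" .
  qed
  also have "\<dots> = (\<Sum>b\<in>Bs. \<Sum>i\<in>UNIV. b $ i * ?r (row i P) b)"
    by (subst sum.swap) (simp only: mult.commute)
  also have "\<dots> = (\<Sum>b\<in>Bs. ?r (b v* P) b)"
  proof (rule sum.cong[OF refl])
    fix b assume "b \<in> Bs"
    have "?r (b v* P) = ?r (\<Sum>i\<in>UNIV. b $ i *s row i P)" by (simp add: vm_rows)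
    also have "\<dots> = (\<lambda>c. \<Sum>i\<in>UNIV. ?r (b $ i *s row i P) c)"
      by (rule vec.representation_sum[OF Bs(2)])
         (intro vec.span_scale inspan row_in_span)
    also have "\<dots> = (\<lambda>c. \<Sum>i\<in>UNIV. b $ i * ?r (row i P) c)"
      by (simp add: vec.representation_scale[OF Bs(2) inspan[OF row_in_span]])
    finally show "(\<Sum>i\<in>UNIV. b $ i * ?r (row i P) b) = ?r (b v* P) b" by simp
  qed
  also have "\<dots> = (\<Sum>b\<in>Bs. 1)"
  proof (rule sum.cong[OF refl])
    fix b assume b: "b \<in> Bs"
    then have "b v* P = b" using Bs(1) fixV by auto
    then show "?r (b v* P) b = 1" using vec.representation_basis[OF Bs(2) b] by simp
  qed
  also have "\<dots> = of_nat (rank P)" by (simp add: rk)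
  finally show ?thesis .
qed

lemma trace_mp_rank: "trace (mp_inv B ** B) = of_nat (rank B)"
proof -
  have "mp_inv B ** B ** (mp_inv B ** B) = mp_inv B ** B"
    using mp_inv_props(2)[of B] by (metis matrix_mul_assoc)
  then show ?thesis using trace_idem_rank[of "mp_inv B ** B"] rank_mp[of B] by simp
qed

lemma trace_mp_rank2: "trace (B ** mp_inv B) = of_nat (rank B)"
  using trace_mp_rank[of B] trace_mul_sym[of B "mp_inv B"] by simp



lemma mm_diff_l: "(A::complex^'n^'m) ** (B - C) = A ** B - A ** C"
  by (simp add: vec_eq_iff matrix_matrix_mult_def algebra_simps sum_subtractf)
lemma mm_diff_r: "((B::complex^'n^'m) - C) ** A = B ** A - C ** A"
  by (simp add: vec_eq_iff matrix_matrix_mult_def algebra_simps sum_subtractf)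
lemma mm_add_r: "((B::complex^'n^'m) + C) ** A = B ** A + C ** A"
  by (simp add: vec_eq_iff matrix_matrix_mult_def algebra_simps sum.distrib)
lemma mm_neg_l: "(A::complex^'n^'m) ** (- B) = - (A ** B)"
  by (simp add: vec_eq_iff matrix_matrix_mult_def sum_negf)
lemma mm_neg_r: "(- (B::complex^'n^'m)) ** A = - (B ** A)"
  by (simp add: vec_eq_iff matrix_matrix_mult_def sum_negf)

lemma frob_trace: "(frob_norm X)\<^sup>2 = Re (trace (X ** ctrans X))"
  by (simp add: frob_sq trace_def matrix_matrix_mult_def Re_sum complex_mult_cnj cmod_power2)

definition herm_idem :: "complex^'n^'n \<Rightarrow> bool" where
  "herm_idem P \<longleftrightarrow> P ** P = P \<and> ctrans P = P"

lemma herm_idem_compl: "herm_idem P \<Longrightarrow> herm_idem (mat 1 - P)"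
  unfolding herm_idem_def by (simp add: mm_diff_l mm_diff_r ctrans_diff)

lemma eq_rank_proj:
  fixes P Q :: "complex^'n^'n"
  assumes P: "herm_idem P" and Q: "herm_idem Q" and tr: "trace P = trace Q"
  shows "frob_norm (P ** (mat 1 - Q)) = frob_norm ((mat 1 - P) ** Q)"
proof -
  have PP: "P ** P = P" and cP: "ctrans P = P" and QQ: "Q ** Q = Q" and cQ: "ctrans Q = Q"
    using P Q by (auto simp: herm_idem_def)
  have PP2: "P ** (P ** X) = P ** X" and QQ2: "Q ** (Q ** X) = Q ** X" for X :: "complex^'k^'n"
    by (simp_all add: matrix_mul_assoc PP QQ)
  have PP3: "Y ** P ** P = Y ** P" and QQ3: "Y ** Q ** Q = Y ** Q" for Y :: "complex^'n^'k"
    by (simp_all add: matrix_mul_assoc[symmetric] PP QQ)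
  have tPQ: "trace (P ** Q) = trace (Q ** P)" by (rule trace_mul_sym)
  have tPQP: "trace (P ** Q ** P) = trace (Q ** P)"
  proof -
    have "trace (P ** (Q ** P)) = trace ((Q ** P) ** P)" by (rule trace_mul_sym)
    then show ?thesis by (simp add: matrix_mul_assoc[symmetric] PP)
  qed
  have 1: "P ** (mat 1 - Q) ** ctrans (P ** (mat 1 - Q)) = P - P ** Q ** P"
  proof -
    have "ctrans (P ** (mat 1 - Q)) = (mat 1 - Q) ** P"
      by (simp add: ctrans_mult ctrans_diff cP cQ)
    moreover have "P ** (mat 1 - Q) ** ((mat 1 - Q) ** P) = P - P ** Q ** P"
      by (simp add: mm_diff_l mm_diff_r matrix_mul_assoc[symmetric] PP QQ PP2 QQ2)
    ultimately show ?thesis by simp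
  qed
  have 2: "(mat 1 - P) ** Q ** ctrans ((mat 1 - P) ** Q) = Q - P ** Q - Q ** P + P ** Q ** P"
  proof -
    have "ctrans ((mat 1 - P) ** Q) = Q ** (mat 1 - P)"
      by (simp add: ctrans_mult ctrans_diff cP cQ)
    moreover have "(mat 1 - P) ** Q ** (Q ** (mat 1 - P)) = Q - P ** Q - Q ** P + P ** Q ** P"
    proof -
      have "(mat 1 - P) ** Q ** (Q ** (mat 1 - P)) = (mat 1 - P) ** Q ** (mat 1 - P)"
        by (simp add: matrix_mul_assoc QQ3)
      also have "\<dots> = Q - P ** Q - Q ** P + P ** Q ** P"
        by (simp add: mm_diff_l mm_diff_r matrix_mul_assoc algebra_simps)
      finally show ?thesis .
    qed
    ultimately show ?thesis by simp
  qed
  have "(frob_norm (P ** (mat 1 - Q)))\<^sup>2 = (frob_norm ((mat 1 - P) ** Q))\<^sup>2"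
    unfolding frob_trace 1 2 by (simp add: trace_sub trace_add tPQ tPQP tr)
  then show ?thesis by (metis frob_nonneg power2_eq_iff_nonneg)
qed

lemma herm_idem_PA: "herm_idem (A ** mp_inv A)"
  unfolding herm_idem_def
  by (metis matrix_mul_assoc mp_inv_props(1,3))

lemma herm_idem_QA: "herm_idem (mp_inv A ** A)"
  unfolding herm_idem_def
  by (metis matrix_mul_assoc mp_inv_props(2,4))

lemma ct_PA: "ctrans A ** A ** mp_inv A = ctrans A"
proof -
  have "ctrans A ** (A ** mp_inv A) = ctrans A ** ctrans (A ** mp_inv A)"
    by (simp add: mp_inv_props(3))
  also have "\<dots> = ctrans (A ** mp_inv A ** A)" by (simp add: ctrans_mult matrix_mul_assoc)
  also have "\<dots> = ctrans A" by (simp add: mp_inv_props(1))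
  finally show ?thesis by (simp add: matrix_mul_assoc)
qed

lemma QA_ct: "mp_inv A ** A ** ctrans A = ctrans A"
proof -
  have "mp_inv A ** A ** ctrans A = ctrans (mp_inv A ** A) ** ctrans A"
    by (simp add: mp_inv_props(4))
  also have "\<dots> = ctrans (A ** (mp_inv A ** A))" by (simp add: ctrans_mult)
  also have "\<dots> = ctrans A" by (simp add: matrix_mul_assoc mp_inv_props(1))
  finally show ?thesis .
qed



lemma mp_r:
  fixes A :: "complex^'n^'m"
  shows "A ** (mp_inv A ** A) = A" "A ** (mp_inv A ** (A ** X)) = A ** X"
    "mp_inv A ** (A ** mp_inv A) = mp_inv A" "mp_inv A ** (A ** (mp_inv A ** Y)) = mp_inv A ** Y"
  by (metis matrix_mul_assoc mp_inv_props(1,2))+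

lemma sq_le: "0 \<le> x \<Longrightarrow> x \<le> c * y \<Longrightarrow> x\<^sup>2 \<le> c\<^sup>2 * (y::real)\<^sup>2"
  by (metis power_mono power_mult_distrib)

lemma decomp_lhs:
  fixes A B :: "complex^'n^'m"
  shows "(frob_norm (mp_inv B - mp_inv A))\<^sup>2 =
     (frob_norm (mp_inv B ** (B - A) ** mp_inv A))\<^sup>2
     + (frob_norm (mp_inv B ** (mat 1 - A ** mp_inv A)))\<^sup>2
     + (frob_norm ((mat 1 - mp_inv B ** B) ** mp_inv A))\<^sup>2"
proof -
  let ?Ai = "mp_inv A" and ?Bi = "mp_inv B"
  let ?X = "?Bi - ?Ai" and ?PA = "A ** ?Ai" and ?QB = "?Bi ** B"
  have hPA: "?PA ** ?PA = ?PA" "ctrans ?PA = ?PA" using herm_idem_PA[of A] by (auto simp: herm_idem_def)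
  have hQB: "?QB ** ?QB = ?QB" "ctrans ?QB = ?QB" using herm_idem_QA[of B] by (auto simp: herm_idem_def)
  have "(frob_norm ?X)\<^sup>2 = (frob_norm (?QB ** ?X))\<^sup>2 + (frob_norm ((mat 1 - ?QB) ** ?X))\<^sup>2"
    by (rule pyth_left[OF hQB])
  also have "(frob_norm (?QB ** ?X))\<^sup>2 = (frob_norm (?QB ** ?X ** ?PA))\<^sup>2 + (frob_norm (?QB ** ?X ** (mat 1 - ?PA)))\<^sup>2"
    by (rule pyth_right[OF hPA])
  also have "?QB ** ?X ** ?PA = - (?Bi ** (B - A) ** ?Ai)"
    by (simp add: matrix_mul_assoc[symmetric] mm_diff_l mm_diff_r mp_r)
  also have "?QB ** ?X ** (mat 1 - ?PA) = ?Bi ** (mat 1 - ?PA)"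
    by (simp add: matrix_mul_assoc[symmetric] mm_diff_l mm_diff_r mp_r)
  also have "(mat 1 - ?QB) ** ?X = - ((mat 1 - ?QB) ** ?Ai)"
    by (simp add: matrix_mul_assoc[symmetric] mm_diff_l mm_diff_r mp_r)
  finally show ?thesis by (simp add: frob_uminus)
qed

lemma part1:
  fixes A B :: "complex^'n^'m"
  shows "(frob_norm (mp_inv B - mp_inv A))\<^sup>2 \<ge>
           ((frob_norm (B - A))\<^sup>2
                  - min ((spec_norm B)\<^sup>2 * (frob_norm (A ** mp_inv A ** (B - A) ** mp_inv B))\<^sup>2)
                        ((spec_norm A)\<^sup>2 * (frob_norm (mp_inv A ** (B - A) ** mp_inv B ** B))\<^sup>2))
                 / max ((spec_norm A)^4) ((spec_norm B)^4)
                 + (frob_norm (mp_inv B ** (B - A) ** mp_inv A))\<^sup>2"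
proof -
  let ?Ai = "mp_inv A" and ?Bi = "mp_inv B" and ?E = "B - A"
  let ?PA = "A ** ?Ai" and ?QB = "?Bi ** B"
  let ?T2 = "?Bi ** (mat 1 - ?PA)" and ?T3 = "(mat 1 - ?QB) ** ?Ai"
  let ?a = "spec_norm A" and ?b = "spec_norm B"
  have a0: "?a \<ge> 0" and b0: "?b \<ge> 0" by (simp_all add: spec_nonneg)
  have hPA: "?PA ** ?PA = ?PA" "ctrans ?PA = ?PA" using herm_idem_PA[of A] by (auto simp: herm_idem_def)
  have hQB: "?QB ** ?QB = ?QB" "ctrans ?QB = ?QB" using herm_idem_QA[of B] by (auto simp: herm_idem_def)
  have e1: "(mat 1 - ?PA) ** ?E = ctrans (ctrans B ** (B ** ?T2))"
  proof -
    have "ctrans B ** (B ** ?T2) = ctrans B ** (mat 1 - ?PA)"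
      using ct_PA[of B] by (simp add: matrix_mul_assoc)
    then have "ctrans (ctrans B ** (B ** ?T2)) = (mat 1 - ?PA) ** B"
      using hPA by (simp add: ctrans_mult ctrans_diff)
    moreover have "(mat 1 - ?PA) ** ?E = (mat 1 - ?PA) ** B"
      by (simp add: matrix_mul_assoc[symmetric] mm_diff_l mm_diff_r mp_r)
    ultimately show ?thesis by simp
  qed
  have b1: "frob_norm ((mat 1 - ?PA) ** ?E) \<le> ?b\<^sup>2 * frob_norm ?T2"
  proof -
    have "frob_norm ((mat 1 - ?PA) ** ?E) = frob_norm (ctrans B ** (B ** ?T2))"
      by (simp add: e1 frob_ctrans)
    also have "\<dots> \<le> spec_norm (ctrans B) * frob_norm (B ** ?T2)" by (rule frob_mult_left)
    also have "\<dots> \<le> ?b * (?b * frob_norm ?T2)"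
      by (intro mult_mono spec_ctrans frob_mult_left) (simp_all add: b0 frob_nonneg)
    finally show ?thesis by (simp add: power2_eq_square mult_ac)
  qed
  have e2: "?E ** (mat 1 - ?QB) = - ctrans (?T3 ** (A ** ctrans A))"
  proof -
    have "?T3 ** (A ** ctrans A) = (mat 1 - ?QB) ** ctrans A"
      using QA_ct[of A] by (metis matrix_mul_assoc)
    then have "ctrans (?T3 ** (A ** ctrans A)) = A ** (mat 1 - ?QB)"
      using hQB by (simp add: ctrans_mult ctrans_diff)
    moreover have "?E ** (mat 1 - ?QB) = - (A ** (mat 1 - ?QB))"
      by (simp add: matrix_mul_assoc[symmetric] mm_diff_l mm_diff_r mp_r)
    ultimately show ?thesis by simp
  qed
  have b2: "frob_norm (?E ** (mat 1 - ?QB)) \<le> ?a\<^sup>2 * frob_norm ?T3"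
  proof -
    have "frob_norm (?E ** (mat 1 - ?QB)) = frob_norm (?T3 ** A ** ctrans A)"
      by (simp add: e2 frob_ctrans frob_uminus matrix_mul_assoc)
    also have "\<dots> \<le> frob_norm (?T3 ** A) * spec_norm (ctrans A)" by (rule frob_mult_right)
    also have "\<dots> \<le> (frob_norm ?T3 * ?a) * ?a"
      by (intro mult_mono spec_ctrans frob_mult_right) (simp_all add: a0 frob_nonneg mult_nonneg_nonneg spec_nonneg)
    finally show ?thesis by (simp add: power2_eq_square mult_ac)
  qed
  have dE: "(frob_norm ?E)\<^sup>2 \<le> (frob_norm (?PA ** ?E ** ?QB))\<^sup>2 + (frob_norm ((mat 1 - ?PA) ** ?E))\<^sup>2
              + (frob_norm (?E ** (mat 1 - ?QB)))\<^sup>2"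
  proof -
    have 1: "(frob_norm ?E)\<^sup>2 = (frob_norm (?PA ** ?E))\<^sup>2 + (frob_norm ((mat 1 - ?PA) ** ?E))\<^sup>2"
      by (rule pyth_left[OF hPA])
    have 2: "(frob_norm (?PA ** ?E))\<^sup>2 = (frob_norm (?PA ** ?E ** ?QB))\<^sup>2 + (frob_norm (?PA ** ?E ** (mat 1 - ?QB)))\<^sup>2"
      by (rule pyth_right[OF hQB])
    have 3: "(frob_norm (?E ** (mat 1 - ?QB)))\<^sup>2 = (frob_norm (?PA ** (?E ** (mat 1 - ?QB))))\<^sup>2 + (frob_norm ((mat 1 - ?PA) ** (?E ** (mat 1 - ?QB))))\<^sup>2"
      by (rule pyth_left[OF hPA])
    show ?thesis using 1 2 3 by (simp add: matrix_mul_assoc)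
  qed
  have m1: "frob_norm (?PA ** ?E ** ?QB) \<le> frob_norm (A ** ?Ai ** ?E ** ?Bi) * ?b"
    using frob_mult_right[of "A ** ?Ai ** ?E ** ?Bi" B] by (simp add: matrix_mul_assoc)
  have m2: "frob_norm (?PA ** ?E ** ?QB) \<le> ?a * frob_norm (?Ai ** ?E ** ?Bi ** B)"
    using frob_mult_left[of A "?Ai ** ?E ** ?Bi ** B"] by (simp add: matrix_mul_assoc)
  have mm: "(frob_norm (?PA ** ?E ** ?QB))\<^sup>2 \<le> min (?b\<^sup>2 * (frob_norm (A ** ?Ai ** ?E ** ?Bi))\<^sup>2)
                        (?a\<^sup>2 * (frob_norm (?Ai ** ?E ** ?Bi ** B))\<^sup>2)"
    using sq_le[OF frob_nonneg m1[simplified mult.commute[of _ ?b]]] sq_le[OF frob_nonneg m2]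
    by simp
  have s1: "(frob_norm ((mat 1 - ?PA) ** ?E))\<^sup>2 \<le> (?b\<^sup>2)\<^sup>2 * (frob_norm ?T2)\<^sup>2"
    by (rule sq_le[OF frob_nonneg b1])
  have s2: "(frob_norm (?E ** (mat 1 - ?QB)))\<^sup>2 \<le> (?a\<^sup>2)\<^sup>2 * (frob_norm ?T3)\<^sup>2"
    by (rule sq_le[OF frob_nonneg b2])
  let ?M = "max (?a^4) (?b^4)"
  let ?m = "min (?b\<^sup>2 * (frob_norm (A ** ?Ai ** ?E ** ?Bi))\<^sup>2) (?a\<^sup>2 * (frob_norm (?Ai ** ?E ** ?Bi ** B))\<^sup>2)"
  have key: "(frob_norm ?E)\<^sup>2 - ?m \<le> ?M * ((frob_norm ?T2)\<^sup>2 + (frob_norm ?T3)\<^sup>2)"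
  proof -
    have p: "(?b\<^sup>2)\<^sup>2 = ?b^4" "(?a\<^sup>2)\<^sup>2 = ?a^4" by (simp_all add: power_mult[symmetric])
    have t1: "?b^4 * (frob_norm ?T2)\<^sup>2 \<le> ?M * (frob_norm ?T2)\<^sup>2"
      by (intro mult_right_mono) simp_all
    have t2: "?a^4 * (frob_norm ?T3)\<^sup>2 \<le> ?M * (frob_norm ?T3)\<^sup>2"
      by (intro mult_right_mono) simp_all
    have d: "?M * ((frob_norm ?T2)\<^sup>2 + (frob_norm ?T3)\<^sup>2) = ?M * (frob_norm ?T2)\<^sup>2 + ?M * (frob_norm ?T3)\<^sup>2"
      by (simp add: distrib_left)
    show ?thesis unfolding d using dE mm s1[unfolded p] s2[unfolded p] t1 t2 by linarith
  qed
  have "((frob_norm ?E)\<^sup>2 - ?m) / ?M \<le> (frob_norm ?T2)\<^sup>2 + (frob_norm ?T3)\<^sup>2"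
  proof (cases "?M = 0")
    case True then show ?thesis by simp
  next
    case False
    have "?M \<ge> 0" by (simp add: le_max_iff_disj)
    with False have "?M > 0" by linarith
    then show ?thesis using key by (simp add: divide_le_eq mult.commute)
  qed
  then show ?thesis using decomp_lhs[of B A] by simp
qed



lemma part2:
  fixes A B :: "complex^'n^'m"
  assumes rk: "rank B = rank A"
  shows "(frob_norm (mp_inv B - mp_inv A))\<^sup>2 \<ge>
           ((frob_norm (B - A))\<^sup>2
                  - min ((spec_norm A)\<^sup>2 * (frob_norm (B ** mp_inv B ** (B - A) ** mp_inv A))\<^sup>2)
                        ((spec_norm B)\<^sup>2 * (frob_norm (mp_inv B ** (B - A) ** mp_inv A ** A))\<^sup>2))
                 / ((spec_norm A)\<^sup>2 * (spec_norm B)\<^sup>2)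
                 + (frob_norm (mp_inv B ** (B - A) ** mp_inv A))\<^sup>2"
proof -
  let ?Ai = "mp_inv A" and ?Bi = "mp_inv B" and ?E = "B - A"
  let ?PA = "A ** ?Ai" and ?QB = "?Bi ** B" and ?PB = "B ** ?Bi" and ?QA = "?Ai ** A"
  let ?T2 = "?Bi ** (mat 1 - ?PA)" and ?T3 = "(mat 1 - ?QB) ** ?Ai"
  let ?a = "spec_norm A" and ?b = "spec_norm B"
  have a0: "?a \<ge> 0" and b0: "?b \<ge> 0" by (simp_all add: spec_nonneg)
  have hPB: "?PB ** ?PB = ?PB" "ctrans ?PB = ?PB" using herm_idem_PA[of B] by (auto simp: herm_idem_def)
  have hQA: "?QA ** ?QA = ?QA" "ctrans ?QA = ?QA" using herm_idem_QA[of A] by (auto simp: herm_idem_def)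
  have trQ: "trace ?QB = trace ?QA" using trace_mp_rank[of A] trace_mp_rank[of B] rk by simp
  have trP: "trace ?PB = trace ?PA" using trace_mp_rank2[of A] trace_mp_rank2[of B] rk by simp
  have 1: "(frob_norm ?E)\<^sup>2 = (frob_norm (?PB ** ?E))\<^sup>2 + (frob_norm ((mat 1 - ?PB) ** ?E))\<^sup>2"
    by (rule pyth_left[OF hPB])
  have 2: "(frob_norm (?PB ** ?E))\<^sup>2 = (frob_norm (?PB ** ?E ** ?QA))\<^sup>2 + (frob_norm (?PB ** ?E ** (mat 1 - ?QA)))\<^sup>2"
    by (rule pyth_right[OF hQA])
  have e1: "?PB ** ?E ** (mat 1 - ?QA) = B ** (?QB ** (mat 1 - ?QA))"
    by (simp add: matrix_mul_assoc[symmetric] mm_diff_l mm_diff_r mp_r)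
  have r1: "frob_norm (?QB ** (mat 1 - ?QA)) = frob_norm ((mat 1 - ?QB) ** ?QA)"
    by (rule eq_rank_proj[OF herm_idem_QA herm_idem_QA trQ])
  have e1b: "(mat 1 - ?QB) ** ?QA = ?T3 ** A" by (simp add: matrix_mul_assoc)
  have b1: "frob_norm (?PB ** ?E ** (mat 1 - ?QA)) \<le> ?b * (frob_norm ?T3 * ?a)"
  proof -
    have "frob_norm (?PB ** ?E ** (mat 1 - ?QA)) \<le> ?b * frob_norm (?QB ** (mat 1 - ?QA))"
      unfolding e1 by (rule frob_mult_left)
    also have "\<dots> \<le> ?b * (frob_norm ?T3 * ?a)"
      unfolding r1 e1b by (intro mult_left_mono frob_mult_right b0)
    finally show ?thesis .
  qed
  have e2: "(mat 1 - ?PB) ** ?E = - ((mat 1 - ?PB) ** ?PA ** A)"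
    by (simp add: matrix_mul_assoc[symmetric] mm_diff_l mm_diff_r mp_r)
  have r2: "frob_norm (?PB ** (mat 1 - ?PA)) = frob_norm ((mat 1 - ?PB) ** ?PA)"
    by (rule eq_rank_proj[OF herm_idem_PA herm_idem_PA trP])
  have e2b: "?PB ** (mat 1 - ?PA) = B ** ?T2" by (simp add: matrix_mul_assoc)
  have b2: "frob_norm ((mat 1 - ?PB) ** ?E) \<le> (?b * frob_norm ?T2) * ?a"
  proof -
    have "frob_norm ((mat 1 - ?PB) ** ?E) \<le> frob_norm ((mat 1 - ?PB) ** ?PA) * ?a"
      unfolding e2 frob_uminus by (rule frob_mult_right)
    also have "\<dots> \<le> (?b * frob_norm ?T2) * ?a"
      unfolding r2[symmetric] e2b by (intro mult_right_mono frob_mult_left a0)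
    finally show ?thesis .
  qed
  have m1: "frob_norm (?PB ** ?E ** ?QA) \<le> frob_norm (B ** ?Bi ** ?E ** ?Ai) * ?a"
    using frob_mult_right[of "B ** ?Bi ** ?E ** ?Ai" A] by (simp add: matrix_mul_assoc)
  have m2: "frob_norm (?PB ** ?E ** ?QA) \<le> ?b * frob_norm (?Bi ** ?E ** ?Ai ** A)"
    using frob_mult_left[of B "?Bi ** ?E ** ?Ai ** A"] by (simp add: matrix_mul_assoc)
  let ?m = "min (?a\<^sup>2 * (frob_norm (B ** ?Bi ** ?E ** ?Ai))\<^sup>2) (?b\<^sup>2 * (frob_norm (?Bi ** ?E ** ?Ai ** A))\<^sup>2)"
  have mm: "(frob_norm (?PB ** ?E ** ?QA))\<^sup>2 \<le> ?m"
    using sq_le[OF frob_nonneg m1[simplified mult.commute[of _ ?a]]] sq_le[OF frob_nonneg m2]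
    by simp
  have s1: "(frob_norm (?PB ** ?E ** (mat 1 - ?QA)))\<^sup>2 \<le> (?a\<^sup>2 * ?b\<^sup>2) * (frob_norm ?T3)\<^sup>2"
    using sq_le[OF frob_nonneg, of _ "?a * ?b" "frob_norm ?T3"] b1
    by (simp add: power_mult_distrib mult_ac)
  have s2: "(frob_norm ((mat 1 - ?PB) ** ?E))\<^sup>2 \<le> (?a\<^sup>2 * ?b\<^sup>2) * (frob_norm ?T2)\<^sup>2"
    using sq_le[OF frob_nonneg, of _ "?a * ?b" "frob_norm ?T2"] b2
    by (simp add: power_mult_distrib mult_ac)
  let ?M = "?a\<^sup>2 * ?b\<^sup>2"
  have key: "(frob_norm ?E)\<^sup>2 - ?m \<le> ?M * ((frob_norm ?T2)\<^sup>2 + (frob_norm ?T3)\<^sup>2)"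
  proof -
    have d: "?M * ((frob_norm ?T2)\<^sup>2 + (frob_norm ?T3)\<^sup>2) = ?M * (frob_norm ?T2)\<^sup>2 + ?M * (frob_norm ?T3)\<^sup>2"
      by (simp add: distrib_left)
    show ?thesis unfolding d using 1 2 mm s1 s2 by linarith
  qed
  have "((frob_norm ?E)\<^sup>2 - ?m) / ?M \<le> (frob_norm ?T2)\<^sup>2 + (frob_norm ?T3)\<^sup>2"
  proof (cases "?M = 0")
    case True show ?thesis unfolding True by simp
  next
    case False
    have "?M \<ge> 0" by simp
    with False have "?M > 0" by linarith
    then show ?thesis using key by (simp add: divide_le_eq mult.commute)
  qed
  then show ?thesis using decomp_lhs[of B A] by simp
qed


lemma frob_swap: "frob_norm (A - B) = frob_norm (B - (A::complex^'n^'m))"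
  by (metis minus_diff_eq frob_uminus)

lemma frob_swap3: "frob_norm (X ** (A - B) ** Y) = frob_norm (X ** (B - A) ** (Y::complex^'k^'n))"
proof -
  have "X ** (A - B) ** Y = - (X ** (B - A) ** Y)" by (simp add: mm_diff_l mm_diff_r)
  then show ?thesis by (simp add: frob_uminus)
qed

lemma frob_swap4: "frob_norm (X ** (A - B) ** Y ** Z) = frob_norm (X ** (B - A) ** Y ** (Z::complex^'k^'l))"
proof -
  have "X ** (A - B) ** Y ** Z = - (X ** (B - A) ** Y ** Z)" by (simp add: mm_diff_l mm_diff_r)
  then show ?thesis by (simp add: frob_uminus)
qed

theorem theorem3p9:
  fixes A B :: "complex^'n^'m"
  defines "E \<equiv> B - A"
  shows "(frob_norm (mp_inv B - mp_inv A))\<^sup>2 \<ge>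
           max (((frob_norm E)\<^sup>2
                  - min ((spec_norm B)\<^sup>2 * (frob_norm (A ** mp_inv A ** E ** mp_inv B))\<^sup>2)
                        ((spec_norm A)\<^sup>2 * (frob_norm (mp_inv A ** E ** mp_inv B ** B))\<^sup>2))
                 / max ((spec_norm A)^4) ((spec_norm B)^4)
                 + (frob_norm (mp_inv B ** E ** mp_inv A))\<^sup>2)
               (((frob_norm E)\<^sup>2
                  - min ((spec_norm A)\<^sup>2 * (frob_norm (B ** mp_inv B ** E ** mp_inv A))\<^sup>2)
                        ((spec_norm B)\<^sup>2 * (frob_norm (mp_inv B ** E ** mp_inv A ** A))\<^sup>2))
                 / max ((spec_norm A)^4) ((spec_norm B)^4)
                 + (frob_norm (mp_inv A ** E ** mp_inv B))\<^sup>2)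
       \<and> (rank B = rank A \<longrightarrow>
          (frob_norm (mp_inv B - mp_inv A))\<^sup>2 \<ge>
           max (((frob_norm E)\<^sup>2
                  - min ((spec_norm A)\<^sup>2 * (frob_norm (B ** mp_inv B ** E ** mp_inv A))\<^sup>2)
                        ((spec_norm B)\<^sup>2 * (frob_norm (mp_inv B ** E ** mp_inv A ** A))\<^sup>2))
                 / ((spec_norm A)\<^sup>2 * (spec_norm B)\<^sup>2)
                 + (frob_norm (mp_inv B ** E ** mp_inv A))\<^sup>2)
               (((frob_norm E)\<^sup>2
                  - min ((spec_norm B)\<^sup>2 * (frob_norm (A ** mp_inv A ** E ** mp_inv B))\<^sup>2)
                        ((spec_norm A)\<^sup>2 * (frob_norm (mp_inv A ** E ** mp_inv B ** B))\<^sup>2))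
                 / ((spec_norm A)\<^sup>2 * (spec_norm B)\<^sup>2)
                 + (frob_norm (mp_inv A ** E ** mp_inv B))\<^sup>2))"
proof -
  note p1 = part1[where A=A and B=B, folded E_def]
  note p2 = part1[where A=B and B=A, unfolded frob_swap[of "mp_inv A" "mp_inv B"] frob_swap[of A B]
      frob_swap3[of _ A B] frob_swap4[of _ A B]
      max.commute[of "(spec_norm B)^4"], folded E_def]
  note p3 = part2[where A=A and B=B, folded E_def]
  note p4 = part2[where A=B and B=A, unfolded frob_swap[of "mp_inv A" "mp_inv B"] frob_swap[of A B]
      frob_swap3[of _ A B] frob_swap4[of _ A B]
      mult.commute[of "(spec_norm B)\<^sup>2" "(spec_norm A)\<^sup>2"], folded E_def]
  show ?thesis
    apply (intro conjI impI max.boundedI)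
    using p1 apply (simp only: )
    using p2 apply (simp only: )
    using p3 apply (simp only: )
    using p4 apply (simp only: )
    done
qed

end
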